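(* Let $T>0$, let $H_C:\mathbb R\to\mathbb C^{N\times N}$ be a continuous family of self-adjoint matrices, let $Q=Q^*\in\mathbb C^{N\times N}$ with $Q\neq0$, and suppose the decoupling condition $\int_0^T U_C(\tau,0)\,Q\,U_C(\tau,0)^*\,d\tau = 0$ holds. Then $$\int_0^T\|H_C(t)\|\,dt \ \ge\ \frac12.$$
   Context: $U_C(t,s)$ is the unitary propagator on $\mathbb C^N$ solving $\partial_tU_C(t,s)=-iH_C(t)U_C(t,s)$, $\partial_sU_C(t,s)=iU_C(t,s)H_C(s)$, $U_C(s,s)=\mathbf 1$; $\|\cdot\|$ is the operator norm on $\mathbb C^N$. *)

theory Defs
  imports "HOL-Analysis.Analysis"
begin

definition adjoint_mat :: "complex^'n^'n \<Rightarrow> complex^'n^'n" where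
  "adjoint_mat A = (\<chi> i j. cnj (A $ j $ i))"

definition op_norm :: "complex^'n^'n \<Rightarrow> real" where
  "op_norm A = onorm (\<lambda>x. A *v x)"

end

theory Submission
  imports Defs
begin

type_synonym 'n cm = "complex^'n^'n"

lemma bil_mm: "bounded_bilinear ((**) :: 'n::finite cm \<Rightarrow> 'n cm \<Rightarrow> 'n cm)"
  unfolding bilinear_conv_bounded_bilinear[symmetric] bilinear_def
  by (auto simp: linear_iff vec_eq_iff
      matrix_matrix_mult_def sum_distrib_left algebra_simps sum.distrib scaleR_sum_right)

lemma bil_mv: "bounded_bilinear ((*v) :: 'n::finite cm \<Rightarrow> complex^'n \<Rightarrow> complex^'n)"
  unfolding bilinear_conv_bounded_bilinear[symmetric] bilinear_def
  by (auto simp: linear_iff vec_eq_iff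
      matrix_vector_mult_def sum_distrib_left algebra_simps sum.distrib scaleR_sum_right)

lemma bl_adj: "bounded_linear (adjoint_mat :: 'n::finite cm \<Rightarrow> 'n cm)"
  unfolding linear_conv_bounded_linear[symmetric]
  by (auto simp: linear_iff vec_eq_iff adjoint_mat_def)

lemma adj_mult: "adjoint_mat (A ** B) = adjoint_mat B ** adjoint_mat (A::'n::finite cm)"
  by (auto simp: vec_eq_iff adjoint_mat_def matrix_matrix_mult_def mult.commute)

lemma adj_mat: "adjoint_mat (mat c :: 'n::finite cm) = mat (cnj c)"
  by (auto simp: vec_eq_iff adjoint_mat_def mat_def)

lemma adj_adj: "adjoint_mat (adjoint_mat (A::'n::finite cm)) = A"
  by (auto simp: vec_eq_iff adjoint_mat_def)

lemma mult_ifl: "(if P then a else 0) * (b::complex) = (if P then a * b else 0)" by simp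
lemma mult_ifr: "b * (if P then a else 0) = (if P then b * (a::complex) else 0)" by simp

lemma mat_comm: "A ** mat c = mat c ** (A::'n::finite cm)"
  by (auto simp: vec_eq_iff matrix_matrix_mult_def mat_def mult_ifl mult_ifr mult.commute)

lemma mat_mul_left: "mat c ** (A::'n::finite cm) = (\<chi> i j. c * A$i$j)"
  by (auto simp: vec_eq_iff matrix_matrix_mult_def mat_def mult_ifl)

lemma inner_cplx: "inner (x::complex) y = Re (cnj x * y)"
  by (simp add: inner_complex_def)

lemma inner_adj: "inner ((A::'n::finite cm) *v x) y = inner x (adjoint_mat A *v y)"
proof -
  have "inner (A *v x) y = Re (\<Sum>i\<in>UNIV. \<Sum>j\<in>UNIV. cnj (A$i$j) * cnj (x$j) * y$i)"
    by (simp add: inner_vec_def inner_cplx matrix_vector_mult_def sum_distrib_right Re_sum)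
  also have "\<dots> = Re (\<Sum>j\<in>UNIV. \<Sum>i\<in>UNIV. cnj (A$i$j) * cnj (x$j) * y$i)"
    by (subst sum.swap) simp
  also have "\<dots> = inner x (adjoint_mat A *v y)"
    by (simp add: inner_vec_def inner_cplx matrix_vector_mult_def sum_distrib_left Re_sum
        adjoint_mat_def algebra_simps)
  finally show ?thesis .
qed

lemma norm_matc: "cmod c = 1 \<Longrightarrow> norm (mat c *v (x::complex^'n::finite)) = norm x"
  by (simp add: norm_vec_def matrix_vector_mult_def mat_def norm_mult mult_ifl)

lemma mat_neg_mul: "mat (-c) ** (A::'n::finite cm) = - (mat c ** A)"
  by (simp add: mat_mul_left vec_eq_iff)

lemma opn: "norm ((A::'n::finite cm) *v x) \<le> op_norm A * norm x"
  unfolding op_norm_def by (rule onorm[OF matrix_vector_mul_bounded_linear])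

lemma opn_nonneg: "0 \<le> op_norm (A::'n::finite cm)"
  unfolding op_norm_def by (rule onorm_pos_le[OF matrix_vector_mul_bounded_linear])

lemma opn_cont: "continuous_on UNIV (op_norm :: 'n::finite cm \<Rightarrow> real)"
proof -
  obtain K where K: "K > 0" "\<And>A x. norm ((A::'n cm) *v x) \<le> norm A * norm x * K"
    using bounded_bilinear.pos_bounded[OF bil_mv] by blast
  have le: "op_norm A \<le> K * norm A" for A :: "'n cm"
    unfolding op_norm_def
    by (rule onorm_bound) (use K in \<open>auto simp: mult.commute mult.left_commute\<close>)
  have tri: "op_norm A \<le> op_norm (A - B) + op_norm B" for A B :: "'n cm"
  proof -
    have "op_norm A = onorm (\<lambda>x. (A - B) *v x + B *v x)"
      unfolding op_norm_def by (simp add: matrix_vector_mult_add_rdistrib[symmetric])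
    also have "\<dots> \<le> op_norm (A - B) + op_norm B"
      unfolding op_norm_def by (rule onorm_triangle) auto
    finally show ?thesis .
  qed
  have "K-lipschitz_on UNIV (op_norm :: 'n cm \<Rightarrow> real)"
    unfolding lipschitz_on_def
  proof (intro conjI ballI)
    show "0 \<le> K" using K by simp
    fix A B :: "'n cm"
    have 1: "op_norm A - op_norm B \<le> K * dist A B"
      using tri[of A B] le[of "A - B"] by (simp add: dist_norm)
    have 2: "op_norm B - op_norm A \<le> K * dist A B"
      using tri[of B A] le[of "B - A"] by (simp add: dist_norm norm_minus_commute)
    show "dist (op_norm A) (op_norm B) \<le> K * dist A B"
      using 1 2 by (simp add: dist_real_def)
  qed
  then show ?thesis by (rule lipschitz_on_continuous_on)
qed

theorem mainTheorem4:
  fixes T :: real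
    and H :: "real \<Rightarrow> complex^'n^'n"
    and U :: "real \<Rightarrow> real \<Rightarrow> complex^'n^'n"
    and Q :: "complex^'n^'n"
  assumes "T > 0"
    and "continuous_on UNIV H"
    and "\<And>t. adjoint_mat (H t) = H t"
    and "\<And>t s. ((\<lambda>t'. U t' s) has_vector_derivative (mat (-\<i>) ** H t ** U t s)) (at t)"
    and "\<And>t s. ((\<lambda>s'. U t s') has_vector_derivative (mat \<i> ** U t s ** H s)) (at s)"
    and "\<And>s. U s s = mat 1"
    and "adjoint_mat Q = Q"
    and "Q \<noteq> 0"
    and "((\<lambda>\<tau>. U \<tau> 0 ** Q ** adjoint_mat (U \<tau> 0)) has_integral 0) {0..T}"
  shows "integral {0..T} (\<lambda>t. op_norm (H t)) \<ge> 1/2"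
proof -
  define V where "V t = adjoint_mat (U t 0)" for t
  have dU: "((\<lambda>t. U t 0) has_vector_derivative (mat (-\<i>) ** H t ** U t 0)) (at t)" for t
    using assms(4) .
  have dV: "(V has_vector_derivative (V t ** H t ** mat \<i>)) (at t)" for t
  proof -
    have "(V has_vector_derivative adjoint_mat (mat (-\<i>) ** H t ** U t 0)) (at t)"
      unfolding V_def by (rule bounded_linear.has_vector_derivative[OF bl_adj dU])
    moreover have "adjoint_mat (mat (-\<i>) ** H t ** U t 0) = V t ** H t ** mat \<i>"
      by (simp add: adj_mult adj_mat assms(3) V_def matrix_mul_assoc)
    ultimately show ?thesis by simp
  qed
  have dP: "((\<lambda>t. V t ** U t 0) has_vector_derivative 0) (at t)" for t
  proof -
    have "((\<lambda>t. V t ** U t 0) has_vector_derivative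
        (V t ** (mat (-\<i>) ** H t ** U t 0) + (V t ** H t ** mat \<i>) ** U t 0)) (at t)"
      by (rule bounded_bilinear.has_vector_derivative[OF bil_mm dV dU])
    moreover have "V t ** (mat (-\<i>) ** H t ** U t 0) + (V t ** H t ** mat \<i>) ** U t 0 = 0"
    proof -
      have "V t ** (mat (-\<i>) ** H t ** U t 0) = - (mat \<i> ** (V t ** H t ** U t 0))"
        by (metis mat_neg_mul mat_comm matrix_mul_assoc)
      moreover have "(V t ** H t ** mat \<i>) ** U t 0 = mat \<i> ** (V t ** H t ** U t 0)"
        by (metis mat_comm matrix_mul_assoc)
      ultimately show ?thesis by simp
    qed
    ultimately show ?thesis by simp
  qed
  have VU: "V t ** U t 0 = mat 1" for t
  proof -
    obtain c where c: "\<forall>x\<in>UNIV. V x ** U x 0 = c"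
      using has_derivative_zero_constant[of UNIV "\<lambda>t. V t ** U t 0"] dP
      unfolding has_vector_derivative_def by auto
    have "V 0 ** U 0 0 = mat 1"
      by (simp add: V_def assms(6) adj_mat)
    then show ?thesis using c by auto
  qed
  have UV: "U t 0 ** V t = mat 1" for t
    using VU matrix_left_right_inverse by blast
  have normU: "norm (U t 0 *v x) = norm x" for t x
  proof -
    have "inner (U t 0 *v x) (U t 0 *v x) = inner x x"
      by (simp add: inner_adj V_def[symmetric] matrix_vector_mul_assoc VU)
    then show ?thesis by (simp add: norm_eq_sqrt_inner)
  qed
  have normV: "norm (V t *v x) = norm x" for t x
  proof -
    have "inner (V t *v x) (V t *v x) = inner x x"
      by (simp add: inner_adj V_def adj_adj matrix_vector_mul_assoc UV[unfolded V_def])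
    then show ?thesis by (simp add: norm_eq_sqrt_inner)
  qed
  define nH where "nH t = op_norm (H t)" for t
  define I where "I = integral {0..T} nH"
  have contnH: "continuous_on UNIV nH"
    unfolding nH_def using continuous_on_compose2[OF opn_cont assms(2)] by auto
  have intnH: "nH integrable_on {x..y}" for x y
    by (rule integrable_continuous_real) (use contnH continuous_on_subset in blast)
  have nHnn: "0 \<le> nH t" for t unfolding nH_def by (rule opn_nonneg)
  have Inn: "0 \<le> I" unfolding I_def by (rule integral_nonneg[OF intnH]) (use nHnn in auto)
  have key: "norm (Q *v b) \<le> 2 * op_norm Q * I * norm b" for b
  proof -
    define a where "a = Q *v b"
    define c where "c = 2 * norm a * norm b * op_norm Q"
    have cnn: "0 \<le> c" unfolding c_def using opn_nonneg[of Q] by simp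
    define g where "g t = inner a ((U t 0 ** Q ** V t) *v b)" for t
    define g' where "g' t = inner a ((U t 0 ** Q ** (V t ** H t ** mat \<i>)
       + (mat (-\<i>) ** H t ** U t 0) ** Q ** V t) *v b)" for t
    have dg: "(g has_vector_derivative g' t) (at t)" for t
    proof -
      have dW: "((\<lambda>t. U t 0 ** Q ** V t) has_vector_derivative
         (U t 0 ** Q ** (V t ** H t ** mat \<i>) + (mat (-\<i>) ** H t ** U t 0) ** Q ** V t)) (at t)"
        by (rule has_vector_derivative_eq_rhs[OF bounded_bilinear.has_vector_derivative[OF bil_mm,
              OF bounded_bilinear.has_vector_derivative[OF bil_mm, OF dU has_vector_derivative_const] dV]])
          (simp add: bounded_bilinear.zero_right[OF bil_mm])
      have dWb: "((\<lambda>t. (U t 0 ** Q ** V t) *v b) has_vector_derivative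
         ((U t 0 ** Q ** (V t ** H t ** mat \<i>) + (mat (-\<i>) ** H t ** U t 0) ** Q ** V t) *v b)) (at t)"
        by (rule has_vector_derivative_eq_rhs[OF bounded_bilinear.has_vector_derivative[OF bil_mv,
              OF dW has_vector_derivative_const]])
          (simp add: bounded_bilinear.zero_right[OF bil_mv])
      show ?thesis unfolding g_def g'_def
        by (rule has_vector_derivative_eq_rhs[OF bounded_bilinear.has_vector_derivative[OF bounded_bilinear_inner,
              OF has_vector_derivative_const dWb]]) simp
    qed
    have g'b: "\<bar>g' t\<bar> \<le> c * nH t" for t
    proof -
      have e1: "(U t 0 ** Q ** (V t ** H t ** mat \<i>)) *v b = U t 0 *v (Q *v (V t *v (H t *v (mat \<i> *v b))))"
        by (simp add: matrix_vector_mul_assoc matrix_mul_assoc)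
      have e2: "((mat (-\<i>) ** H t ** U t 0) ** Q ** V t) *v b = mat (-\<i>) *v (H t *v (U t 0 *v (Q *v (V t *v b))))"
        by (simp add: matrix_vector_mul_assoc matrix_mul_assoc)
      have n1: "norm ((U t 0 ** Q ** (V t ** H t ** mat \<i>)) *v b) \<le> op_norm Q * nH t * norm b"
      proof -
        have "norm ((U t 0 ** Q ** (V t ** H t ** mat \<i>)) *v b) = norm (Q *v (V t *v (H t *v (mat \<i> *v b))))"
          by (simp add: e1 normU)
        also have "\<dots> \<le> op_norm Q * norm (V t *v (H t *v (mat \<i> *v b)))" by (rule opn)
        also have "\<dots> = op_norm Q * norm (H t *v (mat \<i> *v b))" by (simp add: normV)
        also have "\<dots> \<le> op_norm Q * (nH t * norm b)"
          using opn[of "H t" "mat \<i> *v b"] norm_matc[of \<i> b] opn_nonneg[of Q]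
          by (intro mult_left_mono) (auto simp: nH_def)
        finally show ?thesis by simp
      qed
      have n2: "norm (((mat (-\<i>) ** H t ** U t 0) ** Q ** V t) *v b) \<le> op_norm Q * nH t * norm b"
      proof -
        have "norm (((mat (-\<i>) ** H t ** U t 0) ** Q ** V t) *v b) = norm (H t *v (U t 0 *v (Q *v (V t *v b))))"
          by (simp add: e2 norm_matc)
        also have "\<dots> \<le> nH t * norm (U t 0 *v (Q *v (V t *v b)))" unfolding nH_def by (rule opn)
        also have "\<dots> = nH t * norm (Q *v (V t *v b))" by (simp add: normU)
        also have "\<dots> \<le> nH t * (op_norm Q * norm b)"
          using opn[of Q "V t *v b"] normV[of t b] nHnn[of t]
          by (intro mult_left_mono) auto
        finally show ?thesis by (simp add: algebra_simps)
      qed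
      have "\<bar>g' t\<bar> \<le> norm a * norm ((U t 0 ** Q ** (V t ** H t ** mat \<i>)) *v b)
          + norm a * norm (((mat (-\<i>) ** H t ** U t 0) ** Q ** V t) *v b)"
        unfolding g'_def matrix_vector_mult_add_rdistrib inner_add_right
        by (rule order_trans[OF abs_triangle_ineq add_mono[OF Cauchy_Schwarz_ineq2 Cauchy_Schwarz_ineq2]])
      also have "\<dots> \<le> norm a * (op_norm Q * nH t * norm b) + norm a * (op_norm Q * nH t * norm b)"
        by (intro add_mono mult_left_mono n1 n2) auto
      also have "\<dots> = c * nH t" unfolding c_def by (simp add: algebra_simps)
      finally show ?thesis .
    qed
    have lower: "g 0 - c * I \<le> g t" if t: "t \<in> {0..T}" for t
    proof -
      have ftc: "(g' has_integral (g t - g 0)) {0..t}"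
        using t by (intro fundamental_theorem_of_calculus has_vector_derivative_at_within[OF dg]) auto
      have "- c * integral {0..t} nH \<le> g t - g 0"
      proof -
        have "integral {0..t} (\<lambda>s. - c * nH s) \<le> integral {0..t} g'"
        proof (rule integral_le)
          show "(\<lambda>s. - c * nH s) integrable_on {0..t}"
            using integrable_on_cmult_left[OF intnH[of 0 t], of "-c"] by simp
          show "g' integrable_on {0..t}" using ftc by blast
          show "- c * nH x \<le> g' x" for x
            using g'b[of x] unfolding abs_le_iff by linarith
        qed
        then show ?thesis using ftc by (simp add: integral_unique)
      qed
      moreover have "integral {0..t} nH \<le> I"
        unfolding I_def by (rule integral_subset_le) (use t intnH nHnn in auto)
      ultimately show ?thesis using mult_left_mono[OF _ cnn, of "integral {0..t} nH" I]
        by linarith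
    qed
    have gint: "(g has_integral 0) {0..T}"
    proof -
      have bl: "bounded_linear (\<lambda>M::'n cm. inner a (M *v b))"
        by (rule bounded_linear_compose[OF bounded_linear_inner_right bounded_bilinear.bounded_linear_left[OF bil_mv]])
      show ?thesis
        using has_integral_linear[OF assms(9) bl] unfolding g_def V_def o_def by simp
    qed
    have "((\<lambda>t. g 0 - c * I) has_integral (T * (g 0 - c * I))) {0..T}"
      using has_integral_const_real[of "g 0 - c * I" 0 T] assms(1) by simp
    from has_integral_le[OF this gint] lower
    have "T * (g 0 - c * I) \<le> 0" using assms(1) by simp
    then have "g 0 \<le> c * I" using assms(1) by (simp add: mult_le_0_iff)
    moreover have "g 0 = norm a ^ 2"
      by (simp add: g_def V_def assms(6) adj_mat a_def power2_norm_eq_inner)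
    ultimately have "norm a * norm a \<le> norm a * (2 * norm b * op_norm Q * I)"
      unfolding c_def by (simp add: power2_eq_square algebra_simps)
    then have "norm a \<le> 2 * norm b * op_norm Q * I \<or> norm a = 0"
      using mult_le_cancel_left_pos[of "norm a"] by (cases "norm a = 0") auto
    then show ?thesis unfolding a_def
      using Inn opn_nonneg[of Q] by (auto simp: algebra_simps)
  qed
  have "op_norm Q \<le> 2 * op_norm Q * I"
    unfolding op_norm_def
    by (rule onorm_bound) (use key Inn opn_nonneg[of Q] in \<open>auto simp: op_norm_def\<close>)
  moreover have "0 < op_norm Q"
  proof -
    have "\<not> (\<forall>x. Q *v x = 0)" using assms(8) matrix_eq[of Q 0] by auto
    then show ?thesis unfolding op_norm_def
      using onorm_pos_lt[OF matrix_vector_mul_bounded_linear] by blast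
  qed
  ultimately show ?thesis unfolding I_def nH_def by simp
qed

end
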